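(* Let $\langle A, \leq, \otimes, \ominus, \mathbf{1}\rangle$ be a residuated partially ordered monoid with bottom element $\bot$, let $k\geq1$ and $a = a_1\ldots a_k$, $b = b_1\ldots b_k \in Lex_k(A)$. If $\delta(a,b) = \gamma(a,b) \leq k$ or $\delta(a,b) > \gamma(a,b)$, then the residuation $a \ominus_k b$ of $a$ by $b$ in $\langle Lex_k(A), \leq_k, \otimes^k, \mathbf{1}^k\rangle$ exists and equals $$(a_1 \ominus b_1) \ldots (a_{\gamma(a,b)} \ominus b_{\gamma(a,b)})\,\bot^{k-\gamma(a,b)},$$ that is, this tuple $r$ lies in $Lex_k(A)$ and for every $c \in Lex_k(A)$, $b \otimes^k c \leq_k a$ iff $c \leq_k r$.
   Context: A residuated partially ordered monoid $\langle A, \leq, \otimes, \ominus, \mathbf{1}\rangle$ consists of a partial order $\langle A,\leq\rangle$, a commutative monoid $\langle A,\otimes,\mathbf{1}\rangle$, and a binary operation $\ominus$ with $b \otimes c \leq a$ iff $c \leq a \ominus b$ for all $a,b,c\in A$. $a<b$ means $a\leq b$, $a\neq b$. $I(A) = \{c \in A \mid \forall a,b \in A.\ a \otimes c = b \otimes c \Rightarrow a = b\}$, $C(A)=A\setminus I(A)$. $Lex_k(A)\subseteq A^k$: $Lex_1(A) = A$, $Lex_{k+1}(A) = I(A)\, Lex_k(A) \cup C(A)\{\bot\}^k$ (concatenations of sequences; $\{\bot\}^k$ the singleton of $k$ copies of $\bot$). The order $\leq_k$: $\leq_1=\leq$, and for $k\geq2$, $a_1 \ldots a_k \leq_k b_1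 \ldots b_k$ iff $a_1 < b_1$, or $a_1 = b_1$ and $a_2 \ldots a_k \leq_{k-1} b_2 \ldots b_k$. $\otimes^k$ is componentwise, $\mathbf{1}^k=\mathbf{1}\ldots\mathbf{1}$; $\bot^n$ is the sequence of $n$ copies of $\bot$. For $a,b\in Lex_k(A)$: $\gamma(a,b) = \min\{ i \mid a_i \ominus b_i \in C(A)\}$ and $\delta(a,b) = \min\{ i \mid (a_i \ominus b_i) \otimes b_i < a_i\}$, each equal to $k+1$ if the set is empty. *)

theory Defs
  imports Main
begin

text \<open>The carrier A of the residuated partially ordered monoid is the whole type 'a,
  with the partial order of the type class order.\<close>

definition res_pomonoid :: "('a::order \<Rightarrow> 'a \<Rightarrow> 'a) \<Rightarrow> ('a \<Rightarrow> 'a \<Rightarrow> 'a) \<Rightarrow> 'a \<Rightarrow> bool" where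
  "res_pomonoid mult res one \<longleftrightarrow>
     (\<forall>a b c. mult (mult a b) c = mult a (mult b c)) \<and>
     (\<forall>a b. mult a b = mult b a) \<and>
     (\<forall>a. mult one a = a) \<and>
     (\<forall>a b c. mult b c \<le> a \<longleftrightarrow> c \<le> res a b)"

definition Icanc :: "('a \<Rightarrow> 'a \<Rightarrow> 'a) \<Rightarrow> 'a set" where
  "Icanc mult = {c. \<forall>a b. mult a c = mult b c \<longrightarrow> a = b}"

definition Cnc :: "('a \<Rightarrow> 'a \<Rightarrow> 'a) \<Rightarrow> 'a set" where
  "Cnc mult = UNIV - Icanc mult"

text \<open>Lex_k(A) as a set of lists of length k (only meaningful for k \<ge> 1).\<close>
fun Lex :: "('a \<Rightarrow> 'a \<Rightarrow> 'a) \<Rightarrow> 'a \<Rightarrow> nat \<Rightarrow> 'a list set" where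
  "Lex mult bt 0 = {}"
| "Lex mult bt (Suc 0) = {[x] | x. True}"
| "Lex mult bt (Suc (Suc k)) =
     {c # s | c s. c \<in> Icanc mult \<and> s \<in> Lex mult bt (Suc k)} \<union>
     {c # replicate (Suc k) bt | c. c \<in> Cnc mult}"

fun lex_le :: "'a::order list \<Rightarrow> 'a list \<Rightarrow> bool" where
  "lex_le [x] [y] = (x \<le> y)"
| "lex_le (x # x' # xs) (y # y' # ys) = (x < y \<or> (x = y \<and> lex_le (x' # xs) (y' # ys)))"
| "lex_le _ _ = False"

definition mult_k :: "('a \<Rightarrow> 'a \<Rightarrow> 'a) \<Rightarrow> 'a list \<Rightarrow> 'a list \<Rightarrow> 'a list" where
  "mult_k mult a b = map2 mult a b"

text \<open>gamma and delta, with 1-based indices; k = length a.\<close>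
definition gamma :: "('a \<Rightarrow> 'a \<Rightarrow> 'a) \<Rightarrow> ('a \<Rightarrow> 'a \<Rightarrow> 'a) \<Rightarrow> 'a list \<Rightarrow> 'a list \<Rightarrow> nat" where
  "gamma mult res a b =
     (let S = {i. 1 \<le> i \<and> i \<le> length a \<and> res (a ! (i - 1)) (b ! (i - 1)) \<in> Cnc mult}
      in if S = {} then length a + 1 else Min S)"

definition delta :: "('a::order \<Rightarrow> 'a \<Rightarrow> 'a) \<Rightarrow> ('a \<Rightarrow> 'a \<Rightarrow> 'a) \<Rightarrow> 'a list \<Rightarrow> 'a list \<Rightarrow> nat" where
  "delta mult res a b =
     (let S = {i. 1 \<le> i \<and> i \<le> length a \<and>
                 mult (res (a ! (i - 1)) (b ! (i - 1))) (b ! (i - 1)) < a ! (i - 1)}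
      in if S = {} then length a + 1 else Min S)"

end

theory Submission
  imports Defs
begin

fun fidx :: "(nat \<Rightarrow> bool) \<Rightarrow> nat \<Rightarrow> nat" where
  "fidx P 0 = 1"
| "fidx P (Suc n) = (if P 0 then 1 else Suc (fidx (\<lambda>i. P (Suc i)) n))"

lemma fidx_ge1: "fidx P n \<ge> 1"
  by (induction n arbitrary: P) auto

lemma fidx_eq: "(let S = {i. 1 \<le> i \<and> i \<le> n \<and> P (i - 1)} in if S = {} then n + 1 else Min S) = fidx P n"
proof (induction n arbitrary: P)
  case 0
  then show ?case by (auto simp: Let_def)
next
  case (Suc n)
  define S' where "S' = {i. 1 \<le> i \<and> i \<le> n \<and> P (Suc (i - 1))}"
  have IH: "(if S' = {} then n + 1 else Min S') = fidx (\<lambda>i. P (Suc i)) n"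
    using Suc[of "\<lambda>i. P (Suc i)"] unfolding S'_def Let_def by simp_all
  show ?case
  proof (cases "P 0")
    case True
    have m: "1 \<in> {i. 1 \<le> i \<and> i \<le> Suc n \<and> P (i - 1)}" using True by simp
    have "Min {i. 1 \<le> i \<and> i \<le> Suc n \<and> P (i - 1)} = 1"
      by (rule Min_eqI) (use m in auto)
    then show ?thesis using True m by (auto simp: Let_def)
  next
    case False
    have S: "{i. 1 \<le> i \<and> i \<le> Suc n \<and> P (i - 1)} = Suc ` S'"
    proof (rule set_eqI, rule iffI)
      fix i assume "i \<in> {i. 1 \<le> i \<and> i \<le> Suc n \<and> P (i - 1)}"
      then have "1 \<le> i" "i \<le> Suc n" "P (i - 1)" by auto
      with False have "i \<ge> 2" by (cases "i = 1") auto
      then show "i \<in> Suc ` S'" unfolding S'_def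
        using \<open>i \<le> Suc n\<close> \<open>P (i - 1)\<close>
        by (intro image_eqI[of _ _ "i - 1"]) (auto simp: Suc_diff_Suc)
    next
      fix i assume "i \<in> Suc ` S'"
      then show "i \<in> {i. 1 \<le> i \<and> i \<le> Suc n \<and> P (i - 1)}"
        unfolding S'_def by auto
    qed
    have fin: "finite S'" unfolding S'_def by auto
    have "S' \<noteq> {} \<Longrightarrow> Min (Suc ` S') = Suc (Min S')"
      using fin by (simp add: mono_Min_commute[symmetric] mono_Suc)
    note mm = this
    show ?thesis
    proof (cases "S' = {}")
      case True
      have e1: "fidx P (Suc n) = Suc (fidx (\<lambda>i. P (Suc i)) n)" using False by simp
      have e2: "fidx (\<lambda>i. P (Suc i)) n = n + 1" using IH True by simp
      have "fidx P (Suc n) = Suc (Suc n)" using e1 e2 by linarith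
      then show ?thesis using True S by (simp add: Let_def)
    next
      case F2: False
      have "fidx P (Suc n) = Suc (Min S')" using False IH F2 by simp
      then show ?thesis using F2 S mm by (simp add: Let_def)
    qed
  qed
qed

lemma gamma_fidx: "gamma mult res a b = fidx (\<lambda>i. res (a ! i) (b ! i) \<in> Cnc mult) (length a)"
  unfolding gamma_def using fidx_eq[of "length a" "\<lambda>i. res (a ! i) (b ! i) \<in> Cnc mult"]
  by (simp add: Let_def)

lemma delta_fidx: "delta mult res a b = fidx (\<lambda>i. mult (res (a ! i) (b ! i)) (b ! i) < a ! i) (length a)"
  unfolding delta_def using fidx_eq[of "length a" "\<lambda>i. mult (res (a ! i) (b ! i)) (b ! i) < a ! i"]
  by (simp add: Let_def)

lemma rpm_comm: "res_pomonoid mult res one \<Longrightarrow> mult x y = mult y x"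
  unfolding res_pomonoid_def by blast

lemma rpm_res: "res_pomonoid mult res one \<Longrightarrow> mult b c \<le> a \<longleftrightarrow> c \<le> res a b"
  unfolding res_pomonoid_def by blast

lemma rpm_mono: "res_pomonoid mult res one \<Longrightarrow> x \<le> y \<Longrightarrow> mult b x \<le> mult b y"
proof -
  assume r: "res_pomonoid mult res one" and le: "x \<le> y"
  have "y \<le> res (mult b y) b" using rpm_res[OF r] by blast
  then have "x \<le> res (mult b y) b" using le by (rule order_trans[rotated])
  then show ?thesis using rpm_res[OF r] by blast
qed

lemma rpm_bot: "res_pomonoid mult res one \<Longrightarrow> \<forall>x. bt \<le> x \<Longrightarrow> mult b bt = bt"
  by (meson antisym rpm_res)

lemma rpm_bot2: "res_pomonoid mult res one \<Longrightarrow> \<forall>x. bt \<le> x \<Longrightarrow> mult bt b = bt"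
  by (metis rpm_bot rpm_comm)

lemma rpm_resle: "res_pomonoid mult res one \<Longrightarrow> mult (res a b) b \<le> a"
  by (metis order_refl rpm_res rpm_comm)

lemma Lex_len: "a \<in> Lex mult bt k \<Longrightarrow> length a = k"
  by (induction mult bt k arbitrary: a rule: Lex.induct) auto

lemma Lex_one: "a \<in> Lex mult bt (Suc 0) \<longleftrightarrow> (\<exists>x. a = [x])"
  by auto

lemma Lex_cons: "k \<ge> 1 \<Longrightarrow> (x # xs) \<in> Lex mult bt (Suc k) \<longleftrightarrow>
   ((x \<in> Icanc mult \<and> xs \<in> Lex mult bt k) \<or> (x \<in> Cnc mult \<and> xs = replicate k bt))"
  by (cases k) auto

lemma bots_Lex: "k \<ge> 1 \<Longrightarrow> replicate k bt \<in> Lex mult bt k"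
proof (induction k)
  case 0 then show ?case by simp
next
  case (Suc k)
  show ?case
  proof (cases "k = 0")
    case True then show ?thesis by simp
  next
    case False
    then have "k \<ge> 1" by simp
    then show ?thesis using Suc Lex_cons[of k bt "replicate k bt" mult]
      by (auto simp: Cnc_def)
  qed
qed

lemma Lex_tail: "k \<ge> 1 \<Longrightarrow> (x # xs) \<in> Lex mult bt (Suc k) \<Longrightarrow> xs \<in> Lex mult bt k"
  by (subst (asm) Lex_cons) (auto intro: bots_Lex)

lemma lex_le_cons: "xs \<noteq> [] \<Longrightarrow> ys \<noteq> [] \<Longrightarrow>
   lex_le (x # xs) (y # ys) = (x < y \<or> (x = y \<and> lex_le xs ys))"
  by (cases xs; cases ys) auto

lemma lex_le_refl: "xs \<noteq> [] \<Longrightarrow> lex_le xs xs"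
proof (induction xs)
  case Nil then show ?case by simp
next
  case (Cons x xs) then show ?case by (cases xs) auto
qed

lemma bots_le: "\<forall>x. bt \<le> x \<Longrightarrow> xs \<noteq> [] \<Longrightarrow> lex_le (replicate (length xs) bt) xs"
proof (induction xs)
  case Nil then show ?case by simp
next
  case (Cons x xs)
  show ?case
  proof (cases "xs = []")
    case True then show ?thesis using Cons by simp
  next
    case False
    then have "lex_le (replicate (length xs) bt) xs" using Cons by simp
    moreover have "bt < x \<or> bt = x" using Cons(2) by (metis order.not_eq_order_implies_strict)
    ultimately show ?thesis using False lex_le_cons[of "replicate (length xs) bt" xs bt x]
      by auto
  qed
qed

lemma mult_k_cons: "mult_k mult (y # ys) (z # zs) = mult y z # mult_k mult ys zs"
  by (simp add: mult_k_def)

lemma mult_k_len: "length (mult_k mult ys zs) = min (length ys) (length zs)"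
  by (simp add: mult_k_def)

lemma mult_k_bots: "res_pomonoid mult res one \<Longrightarrow> \<forall>x. bt \<le> x \<Longrightarrow>
   mult_k mult (replicate (length zs) bt) zs = replicate (length zs) bt"
  by (induction zs) (auto simp: mult_k_def rpm_bot2)

fun rr :: "('a \<Rightarrow> 'a \<Rightarrow> 'a) \<Rightarrow> ('a \<Rightarrow> 'a \<Rightarrow> 'a) \<Rightarrow> 'a \<Rightarrow> 'a list \<Rightarrow> 'a list \<Rightarrow> 'a list" where
  "rr mult res bt (x # xs) (y # ys) = (if xs = [] then [res x y]
     else if res x y \<in> Cnc mult then res x y # replicate (length xs) bt
     else res x y # rr mult res bt xs ys)"
| "rr mult res bt _ _ = []"

fun okc :: "('a::order \<Rightarrow> 'a \<Rightarrow> 'a) \<Rightarrow> ('a \<Rightarrow> 'a \<Rightarrow> 'a) \<Rightarrow> 'a list \<Rightarrow> 'a list \<Rightarrow> bool" where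
  "okc mult res (x # xs) (y # ys) = (xs = [] \<or> res x y \<in> Cnc mult \<or>
     (mult (res x y) y = x \<and> okc mult res xs ys))"
| "okc mult res _ _ = True"

lemma mult_k_bots2: "res_pomonoid mult res one \<Longrightarrow> \<forall>x. bt \<le> x \<Longrightarrow>
   mult_k mult ys (replicate (length ys) bt) = replicate (length ys) bt"
  by (induction ys) (auto simp: mult_k_def rpm_bot)

lemma okc_from:
  assumes rpm: "res_pomonoid mult res one"
  shows "length a = length b \<Longrightarrow> a \<noteq> [] \<Longrightarrow>
    (fidx (\<lambda>i. mult (res (a ! i) (b ! i)) (b ! i) < a ! i) (length a) = fidx (\<lambda>i. res (a ! i) (b ! i) \<in> Cnc mult) (length a)
      \<and> fidx (\<lambda>i. res (a ! i) (b ! i) \<in> Cnc mult) (length a) \<le> length a)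
    \<or> fidx (\<lambda>i. mult (res (a ! i) (b ! i)) (b ! i) < a ! i) (length a) > fidx (\<lambda>i. res (a ! i) (b ! i) \<in> Cnc mult) (length a)
    \<Longrightarrow> okc mult res a b"
proof (induction a arbitrary: b)
  case Nil then show ?case by simp
next
  case (Cons x xs)
  obtain y ys where b: "b = y # ys" using Cons(2) by (cases b) auto
  show ?case
  proof (cases "xs = [] \<or> res x y \<in> Cnc mult")
    case True then show ?thesis using b by auto
  next
    case False
    then have ne: "xs \<noteq> []" and nc: "res x y \<notin> Cnc mult" by auto
    obtain n where n: "length xs = Suc n" using ne by (cases xs) auto
    have le: "mult (res x y) y \<le> x" by (rule rpm_resle[OF rpm])
    show ?thesis
    proof (cases "mult (res x y) y < x")
      case True
      have "fidx (\<lambda>i. res (xs ! i) (ys ! i) \<in> Cnc mult) (length xs) \<ge> 1" by (rule fidx_ge1)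
      then show ?thesis using Cons(4) True nc b n by simp
    next
      case F: False
      then have eq: "mult (res x y) y = x" using le by (simp add: order.strict_iff_order)
      have "okc mult res xs ys"
        apply (rule Cons(1))
        using Cons(2,4) b ne F nc n by auto
      then show ?thesis using eq b by simp
    qed
  qed
qed

lemma rr_eq:
  shows "length a = length b \<Longrightarrow> a \<noteq> [] \<Longrightarrow>
    map2 res (take (fidx (\<lambda>i. res (a ! i) (b ! i) \<in> Cnc mult) (length a)) a)
             (take (fidx (\<lambda>i. res (a ! i) (b ! i) \<in> Cnc mult) (length a)) b)
    @ replicate (length a - fidx (\<lambda>i. res (a ! i) (b ! i) \<in> Cnc mult) (length a)) bt
    = rr mult res bt a b"
proof (induction a arbitrary: b)
  case Nil then show ?case by simp
next
  case (Cons x xs)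
  obtain y ys where b: "b = y # ys" using Cons(2) by (cases b) auto
  show ?case
  proof (cases "xs = []")
    case True then show ?thesis using b Cons(2) by (auto split: if_splits)
  next
    case ne: False
    obtain n where n: "length xs = Suc n" using ne by (cases xs) auto
    show ?thesis
    proof (cases "res x y \<in> Cnc mult")
      case True then show ?thesis using b ne n by simp
    next
      case False
      have "map2 res (take (fidx (\<lambda>i. res (xs ! i) (ys ! i) \<in> Cnc mult) (length xs)) xs)
             (take (fidx (\<lambda>i. res (xs ! i) (ys ! i) \<in> Cnc mult) (length xs)) ys)
          @ replicate (length xs - fidx (\<lambda>i. res (xs ! i) (ys ! i) \<in> Cnc mult) (length xs)) bt
          = rr mult res bt xs ys"
        using Cons b ne by auto
      then show ?thesis using False b ne n by simp
    qed
  qed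
qed

lemma Cnc_not_I: "z \<in> Cnc mult \<longleftrightarrow> z \<notin> Icanc mult"
  by (simp add: Cnc_def)

lemma main:
  assumes rpm: "res_pomonoid mult res one" and bot: "\<forall>x. bt \<le> x"
  shows "a \<in> Lex mult bt k \<Longrightarrow> b \<in> Lex mult bt k \<Longrightarrow> k \<ge> 1 \<Longrightarrow> okc mult res a b \<Longrightarrow>
    rr mult res bt a b \<in> Lex mult bt k \<and>
    (\<forall>c \<in> Lex mult bt k. lex_le (mult_k mult b c) a \<longleftrightarrow> lex_le c (rr mult res bt a b))"
proof (induction a arbitrary: b k)
  case Nil then show ?case using Lex_len by fastforce
next
  case (Cons x xs)
  have k: "k = Suc (length xs)" using Cons(2) Lex_len by fastforce
  obtain y ys where b: "b = y # ys" using Cons(3) Lex_len k by (cases b) fastforce+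
  have lys: "length ys = length xs" using Cons(3) Lex_len k b by fastforce
  show ?case
  proof (cases "xs = []")
    case True
    then have k1: "k = Suc 0" and ys: "ys = []" using k lys by auto
    have "lex_le (mult_k mult b c) (x # xs) = lex_le c (rr mult res bt (x # xs) b)"
      if "c \<in> Lex mult bt k" for c
    proof -
      have "c \<in> Lex mult bt (Suc 0)" using that k1 by simp
      then obtain z where c: "c = [z]" by auto
      show ?thesis using c b ys True rpm_res[OF rpm] by (simp add: mult_k_def)
    qed
    then show ?thesis using True b k1 by auto
  next
    case ne: False
    define n where "n = length xs"
    have n1: "n \<ge> 1" using ne n_def by (cases xs) auto
    have kn: "k = Suc n" using k n_def by simp
    have xsL: "xs \<in> Lex mult bt n" using Cons(2) kn by (intro Lex_tail[OF n1, of x]) simp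
    have ysL: "ys \<in> Lex mult bt n" using Cons(3) kn b by (intro Lex_tail[OF n1, of y]) simp
    have "(y \<in> Icanc mult \<and> ys \<in> Lex mult bt n) \<or> (y \<in> Cnc mult \<and> ys = replicate n bt)"
      using Lex_cons[OF n1, of y ys mult bt] Cons(3) b kn by simp
    then have yC: "y \<in> Cnc mult \<Longrightarrow> ys = replicate n bt" by (auto simp: Cnc_def)
    have ysne: "ys \<noteq> []" using lys ne by auto
    define x1 where "x1 = res x y"
    have cdecomp: "\<exists>z zs. c = z # zs \<and> zs \<in> Lex mult bt n \<and> length zs = n \<and> zs \<noteq> [] \<and>
        (z \<in> Cnc mult \<longrightarrow> zs = replicate n bt)" if "c \<in> Lex mult bt k" for c
    proof -
      have "length c = Suc n" using Lex_len[OF that] kn by simp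
      then obtain z zs where c: "c = z # zs" by (cases c) auto
      have "zs \<in> Lex mult bt n" using that c kn by (intro Lex_tail[OF n1, of z]) simp
      moreover have "(z \<in> Icanc mult \<and> zs \<in> Lex mult bt n) \<or> (z \<in> Cnc mult \<and> zs = replicate n bt)"
        using Lex_cons[OF n1, of z zs mult bt] that c kn by simp
      then have "z \<in> Cnc mult \<longrightarrow> zs = replicate n bt" by (auto simp: Cnc_def)
      moreover have "length zs = n" using Lex_len[OF \<open>zs \<in> Lex mult bt n\<close>] .
      ultimately show ?thesis using c n1 by auto
    qed
    have multle: "mult y z \<le> x \<longleftrightarrow> z \<le> x1" for z using rpm_res[OF rpm, of y z x] x1_def by simp
    have mulx1: "mult y x1 \<le> x" using multle by simp
    have xsbot: "lex_le (replicate n bt) xs" using bots_le[OF bot ne] n_def by simp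
    show ?thesis
    proof (cases "x1 \<in> Cnc mult")
      case True
      have rr: "rr mult res bt (x # xs) b = x1 # replicate n bt" using True b ne x1_def n_def by simp
      have rrL: "rr mult res bt (x # xs) b \<in> Lex mult bt k"
        using rr kn Lex_cons[OF n1, of x1 "replicate n bt" mult bt] True by simp
      have "lex_le (mult_k mult b c) (x # xs) = lex_le c (x1 # replicate n bt)"
        if cL: "c \<in> Lex mult bt k" for c
      proof -
        obtain z zs where c: "c = z # zs" and zsL: "zs \<in> Lex mult bt n" and lzs: "length zs = n"
          and zsne: "zs \<noteq> []" and zC: "z \<in> Cnc mult \<longrightarrow> zs = replicate n bt"
          using cdecomp[OF cL] by blast
        have mkne: "mult_k mult ys zs \<noteq> []" using mult_k_len[of mult ys zs] lys lzs zsne n_def by auto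
        have R: "lex_le c (x1 # replicate n bt) \<longleftrightarrow> z \<le> x1"
        proof -
          have "lex_le c (x1 # replicate n bt) \<longleftrightarrow> z < x1 \<or> (z = x1 \<and> lex_le zs (replicate n bt))"
            using c lex_le_cons[OF zsne] n1 by (cases n) auto
          moreover have "z = x1 \<Longrightarrow> lex_le zs (replicate n bt)"
            using True zC lex_le_refl[OF zsne] by auto
          ultimately show ?thesis by (auto simp: order.order_iff_strict)
        qed
        have L: "lex_le (mult_k mult b c) (x # xs) \<longleftrightarrow> mult y z < x \<or> (mult y z = x \<and> lex_le (mult_k mult ys zs) xs)"
        proof -
          have "mult_k mult b c = mult y z # mult_k mult ys zs" using b c by (simp add: mult_k_cons)
          then show ?thesis using lex_le_cons[OF mkne ne] by simp
        qed
        have "lex_le (mult_k mult ys zs) xs" if zle: "z \<le> x1" and eq: "mult y z = x"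
        proof (cases "y \<in> Cnc mult")
          case True
          then have "mult_k mult ys zs = replicate n bt" using yC mult_k_bots[OF rpm bot, of zs] lzs by simp
          then show ?thesis using xsbot by simp
        next
          case False
          have "mult y z \<le> mult y x1" using rpm_mono[OF rpm zle] .
          then have "mult y z = mult y x1" using eq mulx1 by simp
          then have m2: "mult z y = mult x1 y" using rpm_comm[OF rpm, of z y] rpm_comm[OF rpm, of x1 y] by simp
          have "y \<in> Icanc mult" using False by (simp add: Cnc_def)
          then have "\<forall>a b. mult a y = mult b y \<longrightarrow> a = b" unfolding Icanc_def by simp
          then have "z = x1" using m2 by blast
          then have "zs = replicate n bt" using zC True by simp
          then have "mult_k mult ys zs = replicate n bt" using mult_k_bots2[OF rpm bot, of ys] lys n_def by simp
          then show ?thesis using xsbot by simp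
        qed
        then show ?thesis using L R multle by (auto simp: order.order_iff_strict)
      qed
      then show ?thesis using rr rrL by simp
    next
      case False
      have okt: "okc mult res xs ys" and eqx: "mult x1 y = x"
        using Cons(5) b ne False x1_def by auto
      have IH: "rr mult res bt xs ys \<in> Lex mult bt n \<and>
        (\<forall>c \<in> Lex mult bt n. lex_le (mult_k mult ys c) xs \<longleftrightarrow> lex_le c (rr mult res bt xs ys))"
        using Cons(1)[OF xsL ysL n1 okt] .
      have rr: "rr mult res bt (x # xs) b = x1 # rr mult res bt xs ys" using False b ne x1_def by simp
      have rrL: "rr mult res bt (x # xs) b \<in> Lex mult bt k"
        using rr kn Lex_cons[OF n1, of x1 "rr mult res bt xs ys" mult bt] False IH by (simp add: Cnc_def)
      have rne: "rr mult res bt xs ys \<noteq> []" using Lex_len[of "rr mult res bt xs ys" mult bt n] IH n1 by auto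
      have eqx': "mult y x1 = x" using eqx rpm_comm[OF rpm, of y x1] by simp
      have "lex_le (mult_k mult b c) (x # xs) = lex_le c (x1 # rr mult res bt xs ys)"
        if cL: "c \<in> Lex mult bt k" for c
      proof -
        obtain z zs where c: "c = z # zs" and zsL: "zs \<in> Lex mult bt n" and lzs: "length zs = n"
          and zsne: "zs \<noteq> []"
          using cdecomp[OF cL] by blast
        have mkne: "mult_k mult ys zs \<noteq> []" using mult_k_len[of mult ys zs] lys lzs zsne n_def by auto
        have R: "lex_le c (x1 # rr mult res bt xs ys) \<longleftrightarrow> z < x1 \<or> (z = x1 \<and> lex_le zs (rr mult res bt xs ys))"
          using c lex_le_cons[OF zsne rne] by simp
        have L: "lex_le (mult_k mult b c) (x # xs) \<longleftrightarrow> mult y z < x \<or> (mult y z = x \<and> lex_le zs (rr mult res bt xs ys))"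
        proof -
          have "mult_k mult b c = mult y z # mult_k mult ys zs" using b c by (simp add: mult_k_cons)
          moreover have "lex_le (mult_k mult ys zs) xs \<longleftrightarrow> lex_le zs (rr mult res bt xs ys)" using IH zsL by blast
          ultimately show ?thesis using lex_le_cons[OF mkne ne] by simp
        qed
        show ?thesis
        proof (cases "y \<in> Cnc mult")
          case True
          then have "mult_k mult ys zs = replicate n bt" using yC mult_k_bots[OF rpm bot, of zs] lzs by simp
          moreover have "lex_le (mult_k mult ys zs) xs \<longleftrightarrow> lex_le zs (rr mult res bt xs ys)" using IH zsL by blast
          ultimately have "lex_le zs (rr mult res bt xs ys)" using xsbot by simp
          then show ?thesis using L R multle by (auto simp: order.order_iff_strict)
        next
          case yI: False
          have canc: "mult y z = x \<longleftrightarrow> z = x1"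
          proof
            assume "mult y z = x"
            then have m2: "mult z y = mult x1 y" using eqx rpm_comm[OF rpm, of z y] by simp
            have "y \<in> Icanc mult" using yI by (simp add: Cnc_def)
            then have "\<forall>a b. mult a y = mult b y \<longrightarrow> a = b" unfolding Icanc_def by simp
            then show "z = x1" using m2 by blast
          qed (use eqx' in simp)
          have "mult y z < x \<longleftrightarrow> z < x1" using canc multle by (auto simp: order.order_iff_strict)
          then show ?thesis using L R canc by blast
        qed
      qed
      then show ?thesis using rr rrL by simp
    qed
  qed
qed

theorem proposition4:
  fixes mult res :: "'a::order \<Rightarrow> 'a \<Rightarrow> 'a" and one bt :: 'a
    and k :: nat and a b :: "'a list"
  assumes rpm: "res_pomonoid mult res one"
    and bot: "\<forall>x. bt \<le> x"
    and k: "k \<ge> 1"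
    and a: "a \<in> Lex mult bt k" and b: "b \<in> Lex mult bt k"
    and hyp: "(delta mult res a b = gamma mult res a b \<and> gamma mult res a b \<le> k)
              \<or> delta mult res a b > gamma mult res a b"
  shows "(let g = gamma mult res a b;
              r = map2 res (take g a) (take g b) @ replicate (k - g) bt
          in r \<in> Lex mult bt k \<and>
             (\<forall>c \<in> Lex mult bt k. lex_le (mult_k mult b c) a \<longleftrightarrow> lex_le c r))"
proof -
  have la: "length a = k" using a by (rule Lex_len)
  have lb: "length b = k" using b by (rule Lex_len)
  have ane: "a \<noteq> []" using la k by auto
  have lab: "length a = length b" using la lb by simp
  have hyp': "(fidx (\<lambda>i. mult (res (a ! i) (b ! i)) (b ! i) < a ! i) (length a) = fidx (\<lambda>i. res (a ! i) (b ! i) \<in> Cnc mult) (length a)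
      \<and> fidx (\<lambda>i. res (a ! i) (b ! i) \<in> Cnc mult) (length a) \<le> length a)
    \<or> fidx (\<lambda>i. mult (res (a ! i) (b ! i)) (b ! i) < a ! i) (length a) > fidx (\<lambda>i. res (a ! i) (b ! i) \<in> Cnc mult) (length a)"
    using hyp unfolding gamma_fidx delta_fidx la .
  have ok: "okc mult res a b" by (rule okc_from[OF rpm lab ane hyp'])
  have r: "map2 res (take (gamma mult res a b) a) (take (gamma mult res a b) b)
      @ replicate (k - gamma mult res a b) bt = rr mult res bt a b"
    using rr_eq[OF lab ane, of res mult bt] unfolding gamma_fidx la .
  have M: "rr mult res bt a b \<in> Lex mult bt k \<and>
    (\<forall>c \<in> Lex mult bt k. lex_le (mult_k mult b c) a \<longleftrightarrow> lex_le c (rr mult res bt a b))"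
    by (rule main[OF rpm bot a b k ok])
  show ?thesis unfolding Let_def r by (rule M)
qed

end
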